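(* For every integer $k\ge 3$ and every $\varepsilon>0$ there is $n_0$ such that every $k$-graph $G$ on $n\ge n_0$ vertices with $\delta_{k-2}(G)=(1/4+\varepsilon)\binom{n}{2}$ is $(k-2)$-connected.
   Context: A $k$-graph $G$ has vertex set $V(G)$ and edges that are $k$-subsets. For $1\le d<k$, $\delta_d(G)$ is the largest $m$ such that every $d$-set of vertices lies in at least $m$ edges. The $\ell$-line graph of $G$ is the graph on $E(G)$ in which $e,f$ are adjacent iff $|e\cap f|\ge\ell$. $G$ is $\ell$-connected if it has no isolated vertices and its edges induce a connected subgraph of the $\ell$-line graph. *)

theory Defs
  imports Complex_Main
begin

definition kgraph :: "nat \<Rightarrow> 'a set \<Rightarrow> 'a set set \<Rightarrow> bool" where
  "kgraph k V E \<longleftrightarrow> finite V \<and> (\<forall>e\<in>E. e \<subseteq> V \<and> card e = k)"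

definition deg :: "'a set set \<Rightarrow> 'a set \<Rightarrow> nat" where
  "deg E S = card {e\<in>E. S \<subseteq> e}"

definition min_deg :: "nat \<Rightarrow> 'a set \<Rightarrow> 'a set set \<Rightarrow> nat" where
  "min_deg d V E = Max {m. \<forall>S. S \<subseteq> V \<and> card S = d \<longrightarrow> m \<le> deg E S}"

definition line_adj :: "nat \<Rightarrow> 'a set set \<Rightarrow> ('a set \<times> 'a set) set" where
  "line_adj l E = {(e, f). e \<in> E \<and> f \<in> E \<and> l \<le> card (e \<inter> f)}"

definition l_connected :: "nat \<Rightarrow> 'a set \<Rightarrow> 'a set set \<Rightarrow> bool" where
  "l_connected l V E \<longleftrightarrow> (\<forall>v\<in>V. \<exists>e\<in>E. v \<in> e) \<and>
     (\<forall>e\<in>E. \<forall>f\<in>E. (e, f) \<in> (line_adj l E)\<^sup>*)"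

end

theory Submission
  imports Defs
begin

lemma min_deg_le:
  assumes "S \<subseteq> V" "card S = d"
  shows "min_deg d V E \<le> deg E S"
proof -
  define M where "M = {m. \<forall>S. S \<subseteq> V \<and> card S = d \<longrightarrow> m \<le> deg E S}"
  have "M \<subseteq> {..deg E S}"
  proof
    fix m assume "m \<in> M"
    hence "m \<le> deg E S" using assms unfolding M_def by blast
    thus "m \<in> {..deg E S}" by simp
  qed
  hence fin: "finite M" using finite_subset by blast
  have "0 \<in> M" unfolding M_def by simp
  hence "Max M \<in> M" using fin Max_in by blast
  hence "Max M \<le> deg E S" using assms unfolding M_def by blast
  thus ?thesis unfolding min_deg_def M_def .
qed

lemma deg_le_choose:
  assumes kg: "kgraph k V E" and k: "k \<ge> 2" and cS: "card S = k - 2"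
  shows "deg E S \<le> card (\<Union>{e\<in>E. S \<subseteq> e} - S) choose 2"
proof -
  let ?W = "\<Union>{e\<in>E. S \<subseteq> e} - S"
  have WV: "?W \<subseteq> V" using kg unfolding kgraph_def by auto
  have finW: "finite ?W" using WV kg finite_subset unfolding kgraph_def by blast
  have "card {e\<in>E. S \<subseteq> e} \<le> card {p. p \<subseteq> ?W \<and> card p = 2}"
  proof (rule card_inj_on_le[where f = "\<lambda>e. e - S"])
    show "inj_on (\<lambda>e. e - S) {e \<in> E. S \<subseteq> e}"
      by (rule inj_onI) blast
    show "(\<lambda>e. e - S) ` {e \<in> E. S \<subseteq> e} \<subseteq> {p. p \<subseteq> ?W \<and> card p = 2}"
    proof
      fix p assume "p \<in> (\<lambda>e. e - S) ` {e \<in> E. S \<subseteq> e}"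
      then obtain e where e: "e \<in> E" "S \<subseteq> e" "p = e - S" by auto
      have ce: "card e = k" "finite e" using e kg k unfolding kgraph_def
        by (auto intro: card_ge_0_finite)
      have "finite S" using e ce finite_subset by blast
      hence "card p = 2" using e ce cS k card_Diff_subset by fastforce
      thus "p \<in> {p. p \<subseteq> ?W \<and> card p = 2}" using e by auto
    qed
    show "finite {p. p \<subseteq> ?W \<and> card p = 2}" using finW by simp
  qed
  also have "\<dots> = card ?W choose 2" using finW n_subsets by blast
  finally show ?thesis unfolding deg_def .
qed

lemma c2nat: "2 * (n choose 2) = n * (n - 1)"
  by (induction n) (auto simp: numeral_2_eq_2 algebra_simps)

lemma c2real: "2 * real (n choose 2) = real n * (real n - 1)"
proof -
  have "real (2 * (n choose 2)) = real (n * (n - 1))" by (simp only: c2nat)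
  thus ?thesis by (cases n) (auto simp: of_nat_mult algebra_simps)
qed

lemma half_bound:
  fixes w n :: nat and \<epsilon> :: real
  assumes "\<epsilon> > 0" "n \<ge> 2" "real (w choose 2) \<ge> (1/4 + \<epsilon>) * real (n choose 2)"
  shows "n < 2 * w"
proof (rule ccontr)
  assume "\<not> n < 2 * w"
  hence le: "2 * real w \<le> real n" by simp
  have cn: "2 * real (n choose 2) = real n * (real n - 1)" by (rule c2real)
  have cw: "2 * real (w choose 2) = real w * (real w - 1)" by (rule c2real)
  have pos: "real (n choose 2) > 0" using assms(2) cn
    by (smt (verit, ccfv_SIG) mult_le_cancel_right1 of_nat_1 of_nat_add of_nat_le_iff one_add_one)
  have "\<epsilon> * real (n choose 2) > 0" using assms pos by simp
  hence "4 * real (w choose 2) > real (n choose 2)" using assms(3)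
    by (simp add: algebra_simps)
  hence "2 * real w * (real w - 1) > real n * (real n - 1) / 2" using cn cw by linarith
  moreover have "2 * real w * (real w - 1) \<le> real n * (real n - 1) / 2"
  proof (cases "w = 0")
    case True thus ?thesis using assms(2) by simp
  next
    case False
    hence "2 * real w * (real w - 1) = real w * (2 * real w - 2)" by (simp add: algebra_simps)
    also have "\<dots> \<le> (real n / 2) * (real n - 2)"
      using le False by (intro mult_mono) auto
    also have "\<dots> \<le> real n * (real n - 1) / 2" using assms(2) by (simp add: field_simps right_diff_distrib)
    finally show ?thesis .
  qed
  ultimately show False by linarith
qed

theorem lemma3p2:
  fixes k :: nat and \<epsilon> :: real
  assumes "k \<ge> 3" and "\<epsilon> > 0"
  shows "\<exists>n0::nat. \<forall>(V::'a set) E. kgraph k V E \<and> card V \<ge> n0 \<and>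
           real (min_deg (k - 2) V E) = (1/4 + \<epsilon>) * real (card V choose 2)
           \<longrightarrow> l_connected (k - 2) V E"
proof (intro exI allI impI)
  fix V :: "'a set" and E
  assume H: "kgraph k V E \<and> card V \<ge> k \<and>
           real (min_deg (k - 2) V E) = (1/4 + \<epsilon>) * real (card V choose 2)"
  hence kg: "kgraph k V E" and nV: "card V \<ge> k"
    and md: "real (min_deg (k - 2) V E) = (1/4 + \<epsilon>) * real (card V choose 2)" by auto
  have finV: "finite V" using kg unfolding kgraph_def by auto
  define W where "W S = \<Union>{e\<in>E. S \<subseteq> e} - S" for S
  have Wbig: "card V < 2 * card (W S)" if "S \<subseteq> V" "card S = k - 2" for S
  proof -
    have "min_deg (k-2) V E \<le> card (W S) choose 2"
      using min_deg_le[OF that, of E] deg_le_choose[OF kg _ that(2)] assms(1)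
      unfolding W_def by fastforce
    hence "real (card (W S) choose 2) \<ge> (1/4 + \<epsilon>) * real (card V choose 2)"
      using md by linarith
    thus ?thesis using half_bound assms nV by fastforce
  qed
  have WV: "W S \<subseteq> V" for S using kg unfolding kgraph_def W_def by auto
  let ?R = "(line_adj (k-2) E)\<^sup>*"
  have symR: "(f, e) \<in> ?R" if "(e, f) \<in> ?R" for e f
  proof -
    have "sym (line_adj (k-2) E)" unfolding line_adj_def sym_def by (auto simp: Int_commute)
    hence "sym ?R" by (rule sym_rtrancl)
    thus ?thesis using that unfolding sym_def by blast
  qed
  have same: "(e, f) \<in> ?R" if "e \<in> E" "f \<in> E" "S \<subseteq> e" "S \<subseteq> f" "card S = k - 2" for e f S
  proof -
    have "finite e" using that kg unfolding kgraph_def by (meson finite_subset finV)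
    hence "card S \<le> card (e \<inter> f)" using that by (intro card_mono) auto
    hence "(e, f) \<in> line_adj (k-2) E" using that unfolding line_adj_def by auto
    thus ?thesis by auto
  qed
  have step: "(e, f) \<in> ?R" if "e \<in> E" "f \<in> E" "S \<subseteq> e" "T \<subseteq> f" "S \<subseteq> V" "T \<subseteq> V"
    "card S = k - 2" "card T = k - 2" "card (S \<inter> T) \<ge> k - 3" for e f S T
  proof -
    have "W S \<inter> W T \<noteq> {}"
    proof
      assume "W S \<inter> W T = {}"
      hence "card (W S) + card (W T) \<le> card V"
        using WV finV by (metis card_Un_disjoint card_mono finite_subset le_sup_iff)
      thus False using Wbig[of S] Wbig[of T] that by linarith
    qed
    then obtain z e' f' where z: "e' \<in> E" "S \<subseteq> e'" "z \<in> e'" "z \<notin> S"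
      "f' \<in> E" "T \<subseteq> f'" "z \<in> f'" "z \<notin> T" unfolding W_def by blast
    have fe: "finite e'" using z kg finV unfolding kgraph_def by (meson finite_subset)
    have fST: "finite (S \<inter> T)" using finV that finite_subset by blast
    have "card (insert z (S \<inter> T)) \<le> card (e' \<inter> f')"
      using z fe by (intro card_mono) auto
    moreover have "card (insert z (S \<inter> T)) = card (S \<inter> T) + 1" using z fST by simp
    ultimately have "(e', f') \<in> line_adj (k-2) E" using z that assms(1)
      unfolding line_adj_def by auto
    hence "(e', f') \<in> ?R" by auto
    moreover have "(e, e') \<in> ?R" using same[of e e' S] that z by auto
    moreover have "(f', f) \<in> ?R" using same[of f' f T] that z by auto
    ultimately show ?thesis by (meson rtrancl_trans)
  qed
  have chain: "\<forall>S T e f. card (S - T) = m \<longrightarrow> e \<in> E \<longrightarrow> f \<in> E \<longrightarrow> S \<subseteq> e \<longrightarrow> T \<subseteq> f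
      \<longrightarrow> S \<subseteq> V \<longrightarrow> T \<subseteq> V \<longrightarrow> card S = k - 2 \<longrightarrow> card T = k - 2 \<longrightarrow> (e, f) \<in> ?R" for m
  proof (induction m)
    case 0
    show ?case
    proof (intro allI impI)
      fix S T e f assume a: "card (S - T) = 0" "e \<in> E" "f \<in> E" "S \<subseteq> e" "T \<subseteq> f"
        "S \<subseteq> V" "T \<subseteq> V" "card S = k - 2" "card T = k - 2"
      have "finite S" "finite T" using a(6,7) finV finite_subset by blast+
      hence "S \<subseteq> T" using a by auto
      hence "S = T" using a \<open>finite T\<close> by (metis card_subset_eq)
      thus "(e, f) \<in> ?R" using same[OF a(2) a(3) a(4) _ a(8)] a(5) by blast
    qed
  next
    case (Suc m)
    show ?case
    proof (intro allI impI)
      fix S T e f assume a: "card (S - T) = Suc m" "e \<in> E" "f \<in> E" "S \<subseteq> e" "T \<subseteq> f"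
        "S \<subseteq> V" "T \<subseteq> V" "card S = k - 2" "card T = k - 2"
      have fS: "finite S" "finite T" using a(6,7) finV finite_subset by blast+
      obtain x where x: "x \<in> S - T" using a by (metis card.empty ex_in_conv nat.distinct(1))
      have "card (T - S) = card (S - T)" using fS a
        by (metis card_Diff_subset_Int Int_commute finite_Int)
      then obtain y where y: "y \<in> T - S" using a by (metis card.empty ex_in_conv nat.distinct(1))
      define S' where "S' = insert y (S - {x})"
      have cS': "card S' = k - 2" using x y fS a assms(1) unfolding S'_def
        by (simp add: card_Diff_singleton)
      have S'V: "S' \<subseteq> V" using x y a unfolding S'_def by auto
      have "S' - T = (S - T) - {x}" using x y unfolding S'_def by auto
      hence cd: "card (S' - T) = m" using a x fS by (simp add: card_Diff_singleton)
      have "S - {x} \<subseteq> S \<inter> S'" unfolding S'_def by auto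
      hence "card (S - {x}) \<le> card (S \<inter> S')" using fS by (intro card_mono) auto
      hence cI: "card (S \<inter> S') \<ge> k - 3" using x fS a by (simp add: card_Diff_singleton)
      have "card S' > 0" using cS' assms(1) by simp
      have "W S' \<noteq> {}" using Wbig[OF S'V cS'] by auto
      hence "\<exists>e'. e' \<in> E \<and> S' \<subseteq> e'" unfolding W_def by blast
      then obtain e' where e': "e' \<in> E" "S' \<subseteq> e'" by blast
      have "(e, e') \<in> ?R" using step[OF a(2) e'(1) a(4) e'(2) a(6) S'V a(8) cS' cI] .
      moreover have "(e', f) \<in> ?R"
        by (rule Suc.IH[rule_format, OF cd e'(1) a(3) e'(2) a(5) S'V a(7) cS' a(9)])
      ultimately show "(e, f) \<in> ?R" by (meson rtrancl_trans)
    qed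
  qed
  show "l_connected (k - 2) V E"
    unfolding l_connected_def
  proof (intro conjI ballI)
    fix v assume v: "v \<in> V"
    have "card (V - {v}) \<ge> k - 3" using v finV nV by (simp add: card_Diff_singleton)
    then obtain S0 where S0: "S0 \<subseteq> V - {v}" "card S0 = k - 3"
      by (meson obtain_subset_with_card_n)
    define S where "S = insert v S0"
    have fS0: "finite S0" using S0 finV finite_subset by blast
    have "v \<notin> S0" using S0 by auto
    hence cS: "card S = k - 2" using S0 fS0 assms(1) unfolding S_def by simp
    have SV: "S \<subseteq> V" using S0 v unfolding S_def by auto
    have "card V < 2 * card (W S)" by (rule Wbig[OF SV cS])
    hence "W S \<noteq> {}" by auto
    then obtain e where "e \<in> E" "S \<subseteq> e" unfolding W_def by blast
    thus "\<exists>e\<in>E. v \<in> e" unfolding S_def by auto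
  next
    fix e f assume ef: "e \<in> E" "f \<in> E"
    have ce: "card e = k" "card f = k" "e \<subseteq> V" "f \<subseteq> V" using ef kg unfolding kgraph_def by auto
    obtain S where S: "S \<subseteq> e" "card S = k - 2" using ce by (metis diff_le_self obtain_subset_with_card_n)
    obtain T where T: "T \<subseteq> f" "card T = k - 2" using ce by (metis diff_le_self obtain_subset_with_card_n)
    have SV: "S \<subseteq> V" "T \<subseteq> V" using S T ce by auto
    show "(e, f) \<in> ?R"
      by (rule chain[of "card (S - T)", rule_format, OF refl ef S(1) T(1) SV S(2) T(2)])
  qed
qed

end
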